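(* Let $X$ be a real inner product space with $\dim X\ge 2$ and inner product $\langle\cdot,\cdot\rangle$. Then there is no function $f\colon X\to\mathbb{R}$ satisfying $f(x+y)=f(x)f(y)-\langle x,y\rangle$ for all $x,y\in X$. *)

theory Defs
  imports "HOL-Analysis.Analysis"
begin

end

theory Submission
  imports Defs
begin

theorem mainTheorem8:
  assumes "\<exists>B :: 'a::real_inner set. independent B \<and> card B = 2"
  shows "\<not> (\<exists>f :: 'a \<Rightarrow> real. \<forall>x y. f (x + y) = f x * f y - inner x y)"
proof
  assume "\<exists>f :: 'a \<Rightarrow> real. \<forall>x y. f (x + y) = f x * f y - inner x y"
  then obtain f :: "'a \<Rightarrow> real" where F: "\<And>x y. f (x + y) = f x * f y - inner x y" by blast
  obtain B :: "'a set" where B: "independent B" "card B = 2" using assms by blast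
  then obtain a b where ab: "B = {a, b}" "a \<noteq> b" by (meson card_2_iff)
  have a0: "a \<noteq> 0" using B(1) ab dependent_zero by blast
  have key: "\<And>x y z. inner x y * (f z - 1) = inner y z * (f x - 1)"
  proof -
    fix x y z
    have "f ((x + y) + z) = f (x + (y + z))" by (simp add: add.assoc)
    hence "(f x * f y - inner x y) * f z - inner (x + y) z = f x * (f y * f z - inner y z) - inner x (y + z)"
      by (simp only: F)
    thus "inner x y * (f z - 1) = inner y z * (f x - 1)"
      by (simp add: inner_add_left inner_add_right algebra_simps inner_commute)
  qed
  define w where "w = b - (inner a b / inner a a) *\<^sub>R a"
  have aa: "inner a a \<noteq> 0" using a0 by simp
  have orth: "inner a w = 0" unfolding w_def using aa by (simp add: inner_diff_right)
  have w0: "w \<noteq> 0"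
  proof
    assume "w = 0"
    hence "b = (inner a b / inner a a) *\<^sub>R a" unfolding w_def by simp
    hence "b \<in> span {a}" by (metis span_base span_mul singletonI)
    moreover have "b \<notin> span (B - {b})" using B(1) ab by (simp add: dependent_def)
    moreover have "B - {b} = {a}" using ab by auto
    ultimately show False by simp
  qed
  have "inner a a * (f w - 1) = inner a w * (f a - 1)" by (rule key)
  hence fw: "f w = 1" using orth aa by simp
  have "inner a a * (f (-w) - 1) = inner a (-w) * (f a - 1)" by (rule key)
  hence fmw: "f (-w) = 1" using orth aa by simp
  have "inner a a * (f 0 - 1) = inner a 0 * (f a - 1)" by (rule key)
  hence f0: "f 0 = 1" using aa by simp
  have "f (w + - w) = f w * f (-w) - inner w (-w)" by (rule F)
  hence "inner w w = 0" using f0 fw fmw by simp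
  thus False using w0 by simp
qed

end
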